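(* Let $\mu\in\mathbb{C}\setminus\{0\}$. Then $\mu$ is a Floquet multiplier of the system $\dot{x}(t)=\sum_{j=0}^h A_j(t)x(t-\tau_j)$ if and only if there exists a continuous $\mathbb{C}^{Nd}$-valued function $\bm{q}(s)=\big(q_1^{\mathrm T}(s)\,\cdots\,q_N^{\mathrm T}(s)\big)^{\mathrm T}$, $s\in[0,1]$, with $\bm{q}(0)\neq 0$, which satisfies the boundary value problem \[ \dot{\bm{q}}(s)=A(s,\mu)\bm{q}(s),\quad s\in[0,1],\qquad \bm{q}(1)=B(\mu)\bm{q}(0), \] where $B(\mu)=\begin{pmatrix}0 & I_{N-1}\\ \mu & 0\end{pmatrix}\otimes I_d$ and the differential equation $\dot{\bm q}(s)=A(s,\mu)\bm q(s)$ means, componentwise, \[ \dot{q}_n(s)=\Delta\sum_{j=0}^h A_j\big((s+n-1)\Delta\big)\,\mu^{a_{n-n_j}}\,q_{b_{n-n_j}}(s),\qquad n=1,\ldots,N, \] with $a_k=\lfloor (k-1)/N\rfloor$ and $b_k=((k-1)\bmod N)+1$.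
   Context: Consider the linear time-periodic delay system $\dot{x}(t)=\sum_{j=0}^h A_j(t)x(t-\tau_j)$ with $h\in\mathbb{N}$, $x(t)\in\mathbb{R}^d$, where each $A_j:\mathbb{R}\to\mathbb{R}^{d\times d}$ is smooth and $T$-periodic ($T>0$), and $0=\tau_0\le\tau_1<\tau_2<\cdots<\tau_h$. Assume there exist $\Delta>0$ and integers $N$, $n_j$ ($j=1,\dots,h$) with $T=N\Delta$ and $\tau_j=n_j\Delta$; set $n_0=0$. Let $X=C([-\tau_h,0],\mathbb{C}^d)$. For $\phi\in X$ and $t_0\in\mathbb{R}$, $x(t;t_0,\phi)$ denotes the unique forward solution with $x(t)=\phi(t-t_0)$ for $t\in[t_0-\tau_h,t_0]$, and $x_t(\theta;t_0,\phi)=x(t+\theta;t_0,\phi)$, $\theta\in[-\tau_h,0]$. The monodromy operator $\mathscr{U}:X\to X$ is $\mathscr{U}\phi=x_T(\cdot;0,\phi)$. Floquet multipliers are the nonzero eigenvalues of $\mathscr{U}$, i.e. $\mu\neq0$ with $\mathscr{U}\phi=\mu\phi$ for some $\phi\in X\setminus\{0\}$. $\otimes$ is the Kronecker product and $k\bmod N$ the remainder of $k$ on division by $N$. *)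

theory Defs
  imports "HOL-Analysis.Analysis"
begin

definition smooth_fun :: "(real \<Rightarrow> 'a::real_normed_vector) \<Rightarrow> bool" where
  "smooth_fun f \<longleftrightarrow> (\<exists>D. D 0 = f \<and> (\<forall>k t. (D k has_vector_derivative D (Suc k) t) (at t)))"

definition cmat :: "real^'d^'d \<Rightarrow> complex^'d^'d" where
  "cmat M = (\<chi> i k. complex_of_real (M $ i $ k))"

definition dde_rhs :: "(nat \<Rightarrow> real \<Rightarrow> real^'d^'d) \<Rightarrow> nat \<Rightarrow> (nat \<Rightarrow> real)
    \<Rightarrow> (real \<Rightarrow> complex^'d) \<Rightarrow> real \<Rightarrow> complex^'d" where
  "dde_rhs A h \<tau> x t = (\<Sum>j\<le>h. cmat (A j t) *v x (t - \<tau> j))"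

definition dde_sol :: "(nat \<Rightarrow> real \<Rightarrow> real^'d^'d) \<Rightarrow> nat \<Rightarrow> (nat \<Rightarrow> real)
    \<Rightarrow> (real \<Rightarrow> complex^'d) \<Rightarrow> (real \<Rightarrow> complex^'d) \<Rightarrow> bool" where
  "dde_sol A h \<tau> \<phi> x \<longleftrightarrow>
     continuous_on {-\<tau> h..} x \<and> (\<forall>\<theta>\<in>{-\<tau> h..0}. x \<theta> = \<phi> \<theta>) \<and>
     (\<forall>t\<ge>0. (x has_vector_derivative dde_rhs A h \<tau> x t) (at t within {0..}))"

definition monodromy :: "(nat \<Rightarrow> real \<Rightarrow> real^'d^'d) \<Rightarrow> nat \<Rightarrow> (nat \<Rightarrow> real) \<Rightarrow> real
    \<Rightarrow> (real \<Rightarrow> complex^'d) \<Rightarrow> (real \<Rightarrow> complex^'d)" where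
  "monodromy A h \<tau> T \<phi> = (THE y. \<exists>x. dde_sol A h \<tau> \<phi> x \<and>
       y = (\<lambda>\<theta>. if \<theta> \<in> {-\<tau> h..0} then x (T + \<theta>) else 0))"

definition floquet_multiplier :: "(nat \<Rightarrow> real \<Rightarrow> real^'d^'d) \<Rightarrow> nat \<Rightarrow> (nat \<Rightarrow> real) \<Rightarrow> real
    \<Rightarrow> complex \<Rightarrow> bool" where
  "floquet_multiplier A h \<tau> T \<mu> \<longleftrightarrow> \<mu> \<noteq> 0 \<and>
     (\<exists>\<phi>. continuous_on {-\<tau> h..0} \<phi> \<and> (\<exists>\<theta>\<in>{-\<tau> h..0}. \<phi> \<theta> \<noteq> 0) \<and>
        (\<forall>\<theta>\<in>{-\<tau> h..0}. monodromy A h \<tau> T \<phi> \<theta> = \<mu> *s \<phi> \<theta>))"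

definition idx_a :: "nat \<Rightarrow> int \<Rightarrow> int" where
  "idx_a N k = \<lfloor>real_of_int (k - 1) / real N\<rfloor>"

definition idx_b :: "nat \<Rightarrow> int \<Rightarrow> nat" where
  "idx_b N k = nat ((k - 1) mod int N) + 1"

text \<open>The boundary value problem; the vector q in C^{Nd} is represented by its d-blocks
  q 1, ..., q N. B(mu) = [[0, I_{N-1}], [mu, 0]] (x) I_d is written out blockwise.\<close>
definition floquet_bvp :: "(nat \<Rightarrow> real \<Rightarrow> real^'d^'d) \<Rightarrow> nat \<Rightarrow> (nat \<Rightarrow> int) \<Rightarrow> nat \<Rightarrow> real
    \<Rightarrow> complex \<Rightarrow> (nat \<Rightarrow> real \<Rightarrow> complex^'d) \<Rightarrow> bool" where
  "floquet_bvp A h n N \<Delta> \<mu> q \<longleftrightarrow>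
     (\<forall>m\<in>{1..N}. continuous_on {0..1} (q m)) \<and>
     (\<exists>m\<in>{1..N}. q m 0 \<noteq> 0) \<and>
     (\<forall>m\<in>{1..N}. \<forall>s\<in>{0..1}. (q m has_vector_derivative
         (complex_of_real \<Delta> *s (\<Sum>j\<le>h.
            cmat (A j ((s + real m - 1) * \<Delta>)) *v
              ((\<mu> powi idx_a N (int m - n j)) *s q (idx_b N (int m - n j)) s))))
       (at s within {0..1})) \<and>
     (\<forall>m\<in>{1..N}. q m 1 = (if m < N then q (m + 1) 0 else \<mu> *s q 1 0))"

end

theory Submission
  imports Defs
begin


definition mb :: "real^'d^'d \<Rightarrow> real" where
  "mb M = (\<Sum>i\<in>UNIV. \<Sum>k\<in>UNIV. \<bar>M $ i $ k\<bar>)"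

lemma mb_nonneg: "0 \<le> mb M"
  unfolding mb_def by (intro sum_nonneg) auto

lemma norm_cmat_mult: "norm (cmat M *v v) \<le> mb M * norm v"
proof -
  have "norm (cmat M *v v) \<le> (\<Sum>i\<in>UNIV. norm ((cmat M *v v) $ i))"
    unfolding norm_vec_def by (rule L2_set_le_sum) auto
  also have "\<dots> \<le> (\<Sum>i\<in>UNIV. (\<Sum>k\<in>UNIV. \<bar>M $ i $ k\<bar>) * norm v)"
  proof (rule sum_mono)
    fix i
    have "norm ((cmat M *v v) $ i) = norm (\<Sum>k\<in>UNIV. complex_of_real (M $ i $ k) * v $ k)"
      by (simp add: matrix_vector_mult_def cmat_def)
    also have "\<dots> \<le> (\<Sum>k\<in>UNIV. norm (complex_of_real (M $ i $ k) * v $ k))"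
      by (rule norm_sum)
    also have "\<dots> \<le> (\<Sum>k\<in>UNIV. \<bar>M $ i $ k\<bar> * norm v)"
      by (intro sum_mono) (auto simp: norm_mult intro!: mult_left_mono Finite_Cartesian_Product.norm_nth_le)
    finally show "norm ((cmat M *v v) $ i) \<le> (\<Sum>k\<in>UNIV. \<bar>M $ i $ k\<bar>) * norm v"
      by (simp add: sum_distrib_right)
  qed
  finally show ?thesis by (simp add: mb_def sum_distrib_right)
qed

lemma has_vector_derivative_Un:
  assumes "(f has_vector_derivative D) (at x within S)"
    and "(f has_vector_derivative D) (at x within T)"
  shows "(f has_vector_derivative D) (at x within (S \<union> T))"
  using assms unfolding has_vector_derivative_def has_derivative_iff_norm
  by (auto simp: Lim_within_Un)

lemma vec_mvt:
  fixes f :: "real \<Rightarrow> 'a::real_normed_vector"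
  assumes "a \<le> b"
    and "\<And>t. t \<in> {a..b} \<Longrightarrow> (f has_vector_derivative f' t) (at t within {a..b})"
    and "\<And>t. t \<in> {a..b} \<Longrightarrow> norm (f' t) \<le> B"
  shows "norm (f b - f a) \<le> B * (b - a)"
proof -
  have "norm (f b - f a) \<le> B * norm (b - a)"
  proof (rule differentiable_bound[of "{a..b}" f "\<lambda>t h. h *\<^sub>R f' t"])
    show "convex {a..b}" by simp
    fix t assume t: "t \<in> {a..b}"
    show "(f has_derivative (\<lambda>h. h *\<^sub>R f' t)) (at t within {a..b})"
      using assms(2)[OF t] by (simp add: has_vector_derivative_def)
    show "onorm (\<lambda>h. h *\<^sub>R f' t) \<le> B"
      using assms(3)[OF t] onorm_scaleR_left[OF bounded_linear_ident, of "f' t"]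
      by (simp add: onorm_id)
  qed (use assms(1) in auto)
  then show ?thesis using assms(1) by simp
qed

lemma gronwall_step:
  fixes g :: "real \<Rightarrow> real"
  assumes cont: "continuous_on {a..b} g"
    and nn: "\<And>t. t \<in> {a..b} \<Longrightarrow> 0 \<le> g t"
    and K: "0 \<le> K"
    and H: "\<And>c t M. a \<le> c \<Longrightarrow> c \<le> t \<Longrightarrow> t \<le> b \<Longrightarrow> (\<forall>r\<in>{a..c}. g r = 0)
              \<Longrightarrow> (\<forall>r\<in>{c..t}. g r \<le> M) \<Longrightarrow> g t \<le> K * (t - c) * M"
    and ga: "g a = 0"
  shows "\<forall>t\<in>{a..b}. g t = 0"
proof -
  define \<delta> where "\<delta> = 1 / (2 * K + 1)"
  have \<delta>pos: "0 < \<delta>" using K by (simp add: \<delta>_def)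
  have K\<delta>: "K * \<delta> \<le> 1/2" using K by (simp add: \<delta>_def field_simps)
  have step: "\<forall>r\<in>{a..min (a + real k * \<delta>) b}. g r = 0" for k
  proof (induction k)
    case 0
    then show ?case using ga by auto
  next
    case (Suc k)
    define c where "c = min (a + real k * \<delta>) b"
    define e where "e = min (a + real (Suc k) * \<delta>) b"
    have ce: "c \<le> e" "e \<le> c + \<delta>" using \<delta>pos by (auto simp: c_def e_def algebra_simps)
    show ?case
    proof (cases "a \<le> b")
      case False then show ?thesis by auto
    next
      case ab: True
      have ac: "a \<le> c" using \<delta>pos ab by (auto simp: c_def)
      have eb: "e \<le> b" by (simp add: e_def)
      have Z: "\<forall>r\<in>{a..c}. g r = 0" using Suc by (simp add: c_def)
      have sub: "{c..e} \<subseteq> {a..b}" using ac eb by auto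
      have "continuous_on {c..e} g" using continuous_on_subset[OF cont sub] .
      then obtain m where m: "m \<in> {c..e}" "\<forall>r\<in>{c..e}. g r \<le> g m"
        using continuous_attains_sup[of "{c..e}" g] ce by fastforce
      have "g m \<le> K * (m - c) * g m"
        using H[of c m "g m"] m ac eb Z by auto
      also have "\<dots> \<le> K * \<delta> * g m"
        using m ce K nn[of m] ac eb by (intro mult_right_mono mult_left_mono) auto
      also have "\<dots> \<le> 1/2 * g m"
        using K\<delta> nn[of m] m ac eb by (intro mult_right_mono) auto
      finally have "g m \<le> 0" by simp
      have Z2: "\<forall>r\<in>{c..e}. g r = 0"
      proof
        fix r assume r: "r \<in> {c..e}"
        then have "g r \<le> 0" using m \<open>g m \<le> 0\<close> by force
        moreover have "0 \<le> g r" using nn r sub by blast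
        ultimately show "g r = 0" by simp
      qed
      show ?thesis unfolding e_def[symmetric]
      proof
        fix r assume r: "r \<in> {a..e}"
        show "g r = 0"
        proof (cases "r \<le> c")
          case True then show ?thesis using Z r by auto
        next
          case False then show ?thesis using Z2 r by auto
        qed
      qed
    qed
  qed
  show ?thesis
  proof
    fix t assume t: "t \<in> {a..b}"
    obtain k :: nat where "(b - a) / \<delta> \<le> real k" using real_arch_simple by blast
    then have "b - a \<le> real k * \<delta>" using \<delta>pos by (simp add: field_simps)
    then have "t \<in> {a..min (a + real k * \<delta>) b}" using t by auto
    then show "g t = 0" using step by blast
  qed
qed




locale dde =
  fixes A :: "nat \<Rightarrow> real \<Rightarrow> real^'d^'d" and h :: nat and \<tau> :: "nat \<Rightarrow> real"
  assumes contA: "\<And>j. j \<le> h \<Longrightarrow> continuous_on UNIV (A j)"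
    and tau_nn: "\<And>j. j \<le> h \<Longrightarrow> 0 \<le> \<tau> j"
    and tau_le: "\<And>j. j \<le> h \<Longrightarrow> \<tau> j \<le> \<tau> h"
begin

abbreviation rhs where "rhs \<equiv> dde_rhs A h \<tau>"

definition KA :: "real \<Rightarrow> real" where "KA t = (\<Sum>j\<le>h. mb (A j t))"

lemma cont_cmat: "j \<le> h \<Longrightarrow> continuous_on S (\<lambda>t. cmat (A j t))"
  unfolding cmat_def
  by (intro continuous_intros continuous_on_subset[OF contA]) auto

lemma cont_mb: "j \<le> h \<Longrightarrow> continuous_on S (\<lambda>t. mb (A j t))"
  unfolding mb_def
  by (intro continuous_intros continuous_on_subset[OF contA]) auto

lemma cont_KA: "continuous_on S KA"
  unfolding KA_def by (intro continuous_intros cont_mb) auto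

lemma KA_nonneg: "0 \<le> KA t"
  unfolding KA_def by (intro sum_nonneg mb_nonneg)

lemma KA_bound: "\<exists>K\<ge>0. \<forall>t\<in>{a..b}. KA t \<le> K"
proof -
  have "compact (KA ` {a..b})" by (intro compact_continuous_image cont_KA) simp
  then obtain B where "\<forall>y\<in>KA ` {a..b}. norm y \<le> B"
    using compact_imp_bounded bounded_iff by metis
  then have "\<forall>t\<in>{a..b}. KA t \<le> max B 0"
    by (metis abs_le_D1 image_eqI max.coboundedI1 real_norm_def)
  then show ?thesis by (intro exI[of _ "max B 0"]) auto
qed

lemma mv_cont:
  fixes M :: "real \<Rightarrow> complex^'d^'d"
  assumes "continuous_on S M" "continuous_on S v"
  shows "continuous_on S (\<lambda>t. M t *v v t)"
  unfolding matrix_vector_mult_def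
  by (intro continuous_intros assms)

lemma cont_rhs:
  assumes x: "continuous_on {-\<tau> h..b} x" and a: "0 \<le> a"
  shows "continuous_on {a..b} (rhs x)"
proof -
  have "continuous_on {a..b} (\<lambda>t. cmat (A j t) *v x (t - \<tau> j))" if j: "j \<le> h" for j
  proof (rule mv_cont)
    show "continuous_on {a..b} (\<lambda>t. cmat (A j t))" by (rule cont_cmat[OF j])
    have "(\<lambda>t. t - \<tau> j) ` {a..b} \<subseteq> {-\<tau> h..b}" using a tau_nn[OF j] tau_le[OF j] by auto
    then show "continuous_on {a..b} (\<lambda>t. x (t - \<tau> j))"
      by (intro continuous_on_compose2[OF x] continuous_intros)
  qed
  then show ?thesis unfolding dde_rhs_def[abs_def]
    by (intro continuous_on_sum) auto
qed

lemma rhs_local: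
  assumes "0 \<le> t" "\<forall>r\<in>{-\<tau> h..t}. x r = y r"
  shows "rhs x t = rhs y t"
  unfolding dde_rhs_def
proof (intro sum.cong refl)
  fix j assume "j \<in> {..h}"
  then have "t - \<tau> j \<in> {-\<tau> h..t}" using assms tau_nn[of j] tau_le[of j] by auto
  then show "cmat (A j t) *v x (t - \<tau> j) = cmat (A j t) *v y (t - \<tau> j)" using assms by simp
qed

lemma rhs_diff_bound:
  assumes "\<And>j. j \<le> h \<Longrightarrow> norm (x (t - \<tau> j) - y (t - \<tau> j)) \<le> M"
  shows "norm (rhs x t - rhs y t) \<le> KA t * M"
proof -
  have "rhs x t - rhs y t = (\<Sum>j\<le>h. cmat (A j t) *v (x (t - \<tau> j) - y (t - \<tau> j)))"
    unfolding dde_rhs_def by (simp add: sum_subtractf matrix_vector_mult_diff_distrib)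
  also have "norm \<dots> \<le> (\<Sum>j\<le>h. norm (cmat (A j t) *v (x (t - \<tau> j) - y (t - \<tau> j))))"
    by (rule norm_sum)
  also have "\<dots> \<le> (\<Sum>j\<le>h. mb (A j t) * M)"
  proof (rule sum_mono)
    fix j assume "j \<in> {..h}"
    then show "norm (cmat (A j t) *v (x (t - \<tau> j) - y (t - \<tau> j))) \<le> mb (A j t) * M"
      using norm_cmat_mult[of "A j t"] assms[of j] mb_nonneg[of "A j t"]
      by (meson atMost_iff mult_left_mono order.trans)
  qed
  finally show ?thesis by (simp add: KA_def sum_distrib_right)
qed

lemma uniq:
  assumes b: "0 \<le> b"
    and cx: "continuous_on {-\<tau> h..b} x" and cy: "continuous_on {-\<tau> h..b} y"
    and init: "\<forall>\<theta>\<in>{-\<tau> h..0}. x \<theta> = y \<theta>"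
    and dx: "\<forall>t\<in>{0..b}. (x has_vector_derivative rhs x t) (at t within {0..b})"
    and dy: "\<forall>t\<in>{0..b}. (y has_vector_derivative rhs y t) (at t within {0..b})"
  shows "\<forall>t\<in>{-\<tau> h..b}. x t = y t"
proof -
  obtain K where K: "K \<ge> 0" "\<forall>t\<in>{0..b}. KA t \<le> K" using KA_bound by blast
  define z where "z t = x t - y t" for t
  have th0: "0 \<le> \<tau> h" using tau_nn by simp
  have "\<forall>t\<in>{0..b}. norm (z t) = 0"
  proof (rule gronwall_step[where K=K])
    have "continuous_on {0..b} z" unfolding z_def
      by (intro continuous_intros continuous_on_subset[OF cx] continuous_on_subset[OF cy]) (use th0 in auto)
    then show "continuous_on {0..b} (\<lambda>t. norm (z t))" by (intro continuous_intros)
    show "norm (z 0) = 0" using init th0 by (simp add: z_def)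
  next
    fix c t M
    assume ct: "0 \<le> c" "c \<le> t" "t \<le> b" and Z: "\<forall>r\<in>{0..c}. norm (z r) = 0"
      and MM: "\<forall>r\<in>{c..t}. norm (z r) \<le> M"
    have M0: "0 \<le> M" using MM ct by (meson atLeastAtMost_iff norm_ge_zero order.trans order_refl)
    have zb: "norm (z r) \<le> M" if "r \<in> {-\<tau> h..t}" for r
    proof -
      consider "r \<le> 0" | "0 \<le> r" "r \<le> c" | "c \<le> r" by linarith
      then show ?thesis
      proof cases
        case 1 then show ?thesis using init that M0 by (simp add: z_def)
      next
        case 2 then show ?thesis using Z M0 by auto
      next
        case 3 then show ?thesis using MM that by auto
      qed
    qed
    have "norm (z t - z c) \<le> (K * M) * (t - c)"
    proof (rule vec_mvt[where f'="\<lambda>r. rhs x r - rhs y r"])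
      fix r assume r: "r \<in> {c..t}"
      have sub: "{c..t} \<subseteq> {0..b}" using ct by auto
      have "r \<in> {0..b}" using r ct by auto
      then show "(z has_vector_derivative rhs x r - rhs y r) (at r within {c..t})"
        unfolding z_def using dx dy
        by (intro has_vector_derivative_diff has_vector_derivative_within_subset[OF _ sub]) auto
      have "norm (rhs x r - rhs y r) \<le> KA r * M"
      proof (rule rhs_diff_bound)
        fix j assume j: "j \<le> h"
        have "r - \<tau> j \<in> {-\<tau> h..t}" using r ct tau_nn[OF j] tau_le[OF j] by auto
        then show "norm (x (r - \<tau> j) - y (r - \<tau> j)) \<le> M" using zb by (simp add: z_def)
      qed
      also have "\<dots> \<le> K * M" using K r ct M0 by (intro mult_right_mono) auto
      finally show "norm (rhs x r - rhs y r) \<le> K * M" .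
    qed (use ct in auto)
    moreover have "z c = 0" using Z ct by auto
    ultimately show "norm (z t) \<le> K * (t - c) * M" by (simp add: algebra_simps)
  qed (use K in auto)
  then show ?thesis using init by (auto simp: z_def)
qed

end



lemma at_within_local: "t < n \<Longrightarrow> at t within {a..} = at t within {a..(n::real)}"
  by (rule at_within_nhd[where S="{..<n}"]) auto

context dde
begin

definition intsol where
  "intsol \<phi> b x \<longleftrightarrow> continuous_on {-\<tau> h..b} x \<and> (\<forall>\<theta>\<in>{-\<tau> h..0}. x \<theta> = \<phi> \<theta>) \<and>
     (\<forall>t\<in>{0..b}. x t = \<phi> 0 + integral {0..t} (rhs x))"

lemma th0: "0 \<le> \<tau> h" using tau_nn by simp

lemma intsol_deriv:
  assumes "intsol \<phi> b x"
  shows "\<forall>t\<in>{0..b}. (x has_vector_derivative rhs x t) (at t within {0..b})"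
proof
  fix t assume t: "t \<in> {0..b}"
  have c: "continuous_on {0..b} (rhs x)" using assms cont_rhs by (auto simp: intsol_def)
  have D: "((\<lambda>u. \<phi> 0 + integral {0..u} (rhs x)) has_vector_derivative rhs x t) (at t within {0..b})"
    using integral_has_vector_derivative[OF c t]
    by (intro derivative_eq_intros) auto
  show "(x has_vector_derivative rhs x t) (at t within {0..b})"
    by (rule has_vector_derivative_transform[OF t _ D]) (use assms in \<open>auto simp: intsol_def\<close>)
qed

lemma intsol_mono:
  assumes "intsol \<phi> b x" "b' \<le> b"
  shows "intsol \<phi> b' x"
  using assms unfolding intsol_def by (auto intro: continuous_on_subset)

lemma intsol_uniq:
  assumes "intsol \<phi> b1 x" "intsol \<phi> b2 y" "0 \<le> b1" "0 \<le> b2"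
  shows "\<forall>t\<in>{-\<tau> h..min b1 b2}. x t = y t"
proof -
  have X: "intsol \<phi> (min b1 b2) x" "intsol \<phi> (min b1 b2) y"
    using assms intsol_mono by auto
  show ?thesis
    by (rule uniq) (use X intsol_deriv[OF X(1)] intsol_deriv[OF X(2)] assms in \<open>auto simp: intsol_def\<close>)
qed

lemma intsol_step:
  assumes c0: "0 \<le> c" and \<delta>: "0 < \<delta>" and K: "0 \<le> K" "\<forall>t\<in>{c..c+\<delta>}. KA t \<le> K" "K * \<delta> \<le> 1/4"
    and w: "intsol \<phi> c w"
  shows "\<exists>x. intsol \<phi> (c + \<delta>) x"
proof -
  define e where "e = c + \<delta>"
  have ce: "c \<le> e" using \<delta> by (simp add: e_def)
  have cw: "continuous_on {-\<tau> h..c} w" using w by (simp add: intsol_def)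
  define E where "E u r = (if r \<le> c then w r else apply_bcontfun u r - apply_bcontfun u c + w c)"
    for u :: "real \<Rightarrow>\<^sub>C (complex^'d)" and r
  define G where "G u y = w c + integral {c..y} (rhs (E u))" for u y
  define cl where "cl t = max c (min t e)" for t
  define F where "F u t = G u (cl t)" for u t
  have clin: "cl t \<in> {c..e}" for t using ce by (auto simp: cl_def)
  have contE: "continuous_on {-\<tau> h..e} (E u)" for u
  proof -
    have 1: "continuous_on {-\<tau> h..c} (E u)"
      using cw by (rule continuous_on_eq) (auto simp: E_def)
    have "continuous_on {c..e} (\<lambda>r. apply_bcontfun u r - apply_bcontfun u c + w c)"
      by (intro continuous_intros continuous_on_apply_bcontfun)
    then have 2: "continuous_on {c..e} (E u)"
      by (rule continuous_on_eq) (auto simp: E_def)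
    have "{-\<tau> h..c} \<union> {c..e} = {-\<tau> h..e}" using c0 th0 ce by auto
    then show ?thesis using continuous_on_closed_Un[OF closed_atLeastAtMost closed_atLeastAtMost 1 2] by simp
  qed
  have crhs: "continuous_on {c..e} (rhs (E u))" for u by (rule cont_rhs[OF contE c0])
  have contG: "continuous_on {c..e} (G u)" for u
    unfolding G_def
    by (intro continuous_intros indefinite_integral_continuous_1 integrable_continuous_real crhs)
  have contF: "continuous_on UNIV (F u)" for u
    unfolding F_def
    by (rule continuous_on_compose2[OF contG[of u]]) (use ce in \<open>auto simp: cl_def clin intro!: continuous_intros\<close>)
  have bF: "bounded (range (F u))" for u
  proof -
    have "compact (G u ` {c..e})" by (intro compact_continuous_image contG) simp
    moreover have "range (F u) \<subseteq> G u ` {c..e}" using clin by (auto simp: F_def)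
    ultimately show ?thesis by (meson bounded_subset compact_imp_bounded)
  qed
  have Fin: "F u \<in> bcontfun" for u using contF bF by (simp add: bcontfun_def)
  define Fb where "Fb u = Bcontfun (F u)" for u
  have Fb_app: "apply_bcontfun (Fb u) t = F u t" for u t
    using Fin by (simp add: Fb_def Bcontfun_inverse)
  have contr: "dist (Fb u) (Fb v) \<le> 1/2 * dist u v" for u v
  proof (rule dist_bound)
    fix t
    define y where "y = cl t"
    have y: "y \<in> {c..e}" using clin by (simp add: y_def)
    have Eb: "norm (E u r - E v r) \<le> 2 * dist u v" for r
    proof (cases "r \<le> c")
      case True then show ?thesis by (simp add: E_def)
    next
      case False
      have "E u r - E v r = (apply_bcontfun u r - apply_bcontfun v r) - (apply_bcontfun u c - apply_bcontfun v c)"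
        using False by (simp add: E_def algebra_simps)
      also have "norm \<dots> \<le> norm (apply_bcontfun u r - apply_bcontfun v r) + norm (apply_bcontfun u c - apply_bcontfun v c)"
        by (rule norm_triangle_ineq4)
      also have "\<dots> \<le> 2 * dist u v"
        using dist_bounded[of u r v] dist_bounded[of u c v] by (simp add: dist_norm)
      finally show ?thesis .
    qed
    have int: "(rhs (E u)) integrable_on {c..y}" "(rhs (E v)) integrable_on {c..y}"
      using y by (auto intro!: integrable_continuous_real continuous_on_subset[OF crhs])
    have "dist (F u t) (F v t) = norm (integral {c..y} (\<lambda>s. rhs (E u) s - rhs (E v) s))"
      by (simp add: F_def G_def y_def[symmetric] dist_norm integral_diff[OF int])
    also have "\<dots> \<le> integral {c..y} (\<lambda>s. K * (2 * dist u v))"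
    proof (rule integral_norm_bound_integral)
      show "(\<lambda>s. rhs (E u) s - rhs (E v) s) integrable_on {c..y}" using int by (rule integrable_diff)
      show "(\<lambda>s. K * (2 * dist u v)) integrable_on {c..y}" by (rule integrable_const_ivl)
      fix s assume s: "s \<in> {c..y}"
      have "norm (rhs (E u) s - rhs (E v) s) \<le> KA s * (2 * dist u v)"
        by (rule rhs_diff_bound) (rule Eb)
      also have "\<dots> \<le> K * (2 * dist u v)"
        using K s y by (intro mult_right_mono) (auto simp: e_def)
      finally show "norm (rhs (E u) s - rhs (E v) s) \<le> K * (2 * dist u v)" .
    qed
    also have "\<dots> = (y - c) * (K * (2 * dist u v))" using y by simp
    also have "\<dots> \<le> \<delta> * (K * (2 * dist u v))"
      using y K by (intro mult_right_mono) (auto simp: e_def)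
    also have "\<dots> = 2 * (K * \<delta>) * dist u v" by simp
    also have "\<dots> \<le> 2 * (1/4) * dist u v"
      using K by (intro mult_right_mono mult_left_mono) auto
    finally show "dist (apply_bcontfun (Fb u) t) (apply_bcontfun (Fb v) t) \<le> 1/2 * dist u v"
      by (simp add: Fb_app)
  qed
  obtain u0 where u0: "Fb u0 = u0"
    using banach_fix_type[of "1/2" Fb] contr by auto
  have u0app: "apply_bcontfun u0 t = F u0 t" for t using Fb_app[of u0 t] u0 by simp
  define x where "x = E u0"
  have u0c: "apply_bcontfun u0 c = w c"
    using u0app[of c] ce by (simp add: F_def G_def cl_def)
  have cx: "continuous_on {-\<tau> h..e} x" by (simp add: x_def contE)
  have xw: "x r = w r" if "r \<le> c" for r using that by (simp add: x_def E_def)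
  have cr: "continuous_on {0..e} (rhs x)" by (rule cont_rhs[OF cx]) simp
  have "intsol \<phi> e x"
    unfolding intsol_def
  proof (intro conjI ballI cx)
    fix \<theta> assume "\<theta> \<in> {-\<tau> h..0}"
    then show "x \<theta> = \<phi> \<theta>" using xw[of \<theta>] w c0 by (auto simp: intsol_def)
  next
    fix t assume t: "t \<in> {0..e}"
    have loc: "rhs x s = rhs w s" if "s \<in> {0..c}" for s
      by (rule rhs_local) (use that xw in auto)
    have I0: "integral {0..c'} (rhs x) = integral {0..c'} (rhs w)" if "c' \<le> c" for c'
      by (rule integral_cong) (use loc that in auto)
    show "x t = \<phi> 0 + integral {0..t} (rhs x)"
    proof (cases "t \<le> c")
      case True
      then show ?thesis using w t xw[of t] I0[of t] by (auto simp: intsol_def)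
    next
      case False
      have "x t = apply_bcontfun u0 t - apply_bcontfun u0 c + w c"
        using False by (simp add: x_def E_def)
      also have "\<dots> = w c + integral {c..t} (rhs x)"
        using u0app[of t] u0c False t by (simp add: F_def G_def cl_def x_def)
      also have "w c = \<phi> 0 + integral {0..c} (rhs x)"
        using w c0 I0[of c] by (auto simp: intsol_def)
      also have "\<phi> 0 + integral {0..c} (rhs x) + integral {c..t} (rhs x) = \<phi> 0 + integral {0..t} (rhs x)"
      proof -
        have "(rhs x) integrable_on {0..t}"
          using t by (intro integrable_continuous_real continuous_on_subset[OF cr]) auto
        then show ?thesis using Henstock_Kurzweil_Integration.integral_combine[of 0 c t "rhs x"] c0 False by (simp add: add.assoc)
      qed
      finally show ?thesis .
    qed
  qed
  then show ?thesis unfolding e_def by blast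
qed

lemma intsol_exists:
  assumes cphi: "continuous_on {-\<tau> h..0} \<phi>" and b: "0 \<le> b"
  shows "\<exists>x. intsol \<phi> b x"
proof -
  obtain K where K: "K \<ge> 0" "\<forall>t\<in>{0..b+1}. KA t \<le> K" using KA_bound by blast
  define \<delta> where "\<delta> = min 1 (1 / (4 * K + 1))"
  have \<delta>: "0 < \<delta>" "\<delta> \<le> 1" using K by (auto simp: \<delta>_def)
  have K\<delta>: "K * \<delta> \<le> 1/4"
  proof -
    have "K * \<delta> \<le> K * (1 / (4 * K + 1))" using K by (intro mult_left_mono) (auto simp: \<delta>_def)
    also have "\<dots> \<le> 1/4" using K by (simp add: field_simps)
    finally show ?thesis .
  qed
  have base: "intsol \<phi> 0 \<phi>" using cphi by (auto simp: intsol_def)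
  have ind: "real k * \<delta> \<le> b + 1 \<longrightarrow> (\<exists>x. intsol \<phi> (real k * \<delta>) x)" for k
  proof (induction k)
    case 0 then show ?case using base by auto
  next
    case (Suc k)
    show ?case
    proof
      assume le: "real (Suc k) * \<delta> \<le> b + 1"
      then have "real k * \<delta> \<le> b + 1" using \<delta> by (simp add: algebra_simps)
      then obtain w where w: "intsol \<phi> (real k * \<delta>) w" using Suc by blast
      have k0: "0 \<le> real k * \<delta>" using \<delta> by simp
      have KK: "\<forall>t\<in>{real k * \<delta>..real k * \<delta> + \<delta>}. KA t \<le> K"
      proof
        fix t assume t: "t \<in> {real k * \<delta>..real k * \<delta> + \<delta>}"
        have "real k * \<delta> + \<delta> \<le> b + 1" using le by (simp add: algebra_simps)
        have t1: "real k * \<delta> \<le> t" "t \<le> real k * \<delta> + \<delta>" using t by auto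
        have "0 \<le> t" "t \<le> b + 1" using k0 t1 \<open>real k * \<delta> + \<delta> \<le> b + 1\<close> by linarith+
        then have "t \<in> {0..b+1}" by simp
        then show "KA t \<le> K" using K by blast
      qed
      have "\<exists>x. intsol \<phi> (real k * \<delta> + \<delta>) x"
        by (rule intsol_step[OF k0 \<delta>(1) K(1) KK K\<delta> w])
      then show "\<exists>x. intsol \<phi> (real (Suc k) * \<delta>) x" by (simp add: algebra_simps)
    qed
  qed
  define k where "k = nat \<lceil>b / \<delta>\<rceil>"
  have "b / \<delta> \<le> real k" by (simp add: k_def) linarith
  then have k1: "b \<le> real k * \<delta>" using \<delta> by (simp add: field_simps)
  have "real k < b / \<delta> + 1" using b \<delta> by (simp add: k_def) linarith
  then have k2: "real k * \<delta> \<le> b + 1" using \<delta> by (simp add: field_simps)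
  obtain x where "intsol \<phi> (real k * \<delta>) x" using ind[of k] k2 by blast
  then show ?thesis using intsol_mono k1 by blast
qed

end



context dde
begin

lemma dde_sol_uniq:
  assumes "dde_sol A h \<tau> \<phi> x" "dde_sol A h \<tau> \<phi> y" "-\<tau> h \<le> t"
  shows "x t = y t"
proof -
  define b where "b = max t 0"
  have b: "0 \<le> b" "t \<le> b" by (auto simp: b_def)
  have sub: "{-\<tau> h..b} \<subseteq> {-\<tau> h..}" "{0..b} \<subseteq> {0..}" by auto
  have "\<forall>t\<in>{-\<tau> h..b}. x t = y t"
  proof (rule uniq[OF b(1)])
    show "continuous_on {-\<tau> h..b} x" "continuous_on {-\<tau> h..b} y"
      using assms continuous_on_subset[OF _ sub(1)] by (auto simp: dde_sol_def)
    show "\<forall>\<theta>\<in>{- \<tau> h..0}. x \<theta> = y \<theta>" using assms by (auto simp: dde_sol_def)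
    show "\<forall>t\<in>{0..b}. (x has_vector_derivative rhs x t) (at t within {0..b})"
      "\<forall>t\<in>{0..b}. (y has_vector_derivative rhs y t) (at t within {0..b})"
      using assms by (auto simp: dde_sol_def intro: has_vector_derivative_within_subset[OF _ sub(2)])
  qed
  then show ?thesis using assms b by auto
qed

lemma dde_sol_exists:
  assumes cphi: "continuous_on {-\<tau> h..0} \<phi>"
  shows "\<exists>x. dde_sol A h \<tau> \<phi> x"
proof -
  define S where "S n = (SOME x. intsol \<phi> (real n) x)" for n :: nat
  have S: "intsol \<phi> (real n) (S n)" for n
  proof -
    obtain y where "intsol \<phi> (real n) y" using intsol_exists[OF cphi, of "real n"] by auto
    then show ?thesis using someI[of "intsol \<phi> (real n)" y] by (simp add: S_def)
  qed
  define x where "x t = S (nat \<lceil>t\<rceil> + 1) t" for t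
  have xS: "x t = S n t" if "t \<in> {-\<tau> h..real n}" for t n
  proof -
    define m where "m = nat \<lceil>t\<rceil> + 1"
    have "t \<le> real m" unfolding m_def by linarith
    then have "t \<in> {-\<tau> h..min (real m) (real n)}" using that by auto
    then show ?thesis using intsol_uniq[OF S[of m] S[of n]] by (simp add: x_def m_def)
  qed
  have cxn: "continuous_on {-\<tau> h..real n} x" for n
  proof -
    have "continuous_on {-\<tau> h..real n} (S n)" using S[of n] by (simp add: intsol_def)
    then show ?thesis by (rule continuous_on_eq) (use xS in auto)
  qed
  have show1: "continuous_on {-\<tau> h..} x"
    unfolding continuous_on_eq_continuous_within
  proof
    fix t assume t: "t \<in> {-\<tau> h..}"
    define n where "n = nat \<lceil>t\<rceil> + 1"
    have tn: "t < real n" unfolding n_def by linarith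
    have "continuous (at t within {-\<tau> h..real n}) x"
      using cxn[of n] t tn unfolding continuous_on_eq_continuous_within by auto
    then show "continuous (at t within {-\<tau> h..}) x" using at_within_local[OF tn] by simp
  qed
  have show2: "\<forall>\<theta>\<in>{-\<tau> h..0}. x \<theta> = \<phi> \<theta>"
    using S[of 0] xS[of _ 0] by (auto simp: intsol_def)
  have show3: "(x has_vector_derivative rhs x t) (at t within {0..})" if t: "t \<ge> 0" for t
  proof -
    define n where "n = nat \<lceil>t\<rceil> + 1"
    have tn: "t < real n" unfolding n_def by linarith
    have D: "(S n has_vector_derivative rhs (S n) t) (at t within {0..real n})"
      using intsol_deriv[OF S[of n]] t tn by auto
    have "rhs (S n) t = rhs x t"
      by (rule rhs_local) (use t tn xS[of _ n] in auto)
    then have "(x has_vector_derivative rhs x t) (at t within {0..real n})"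
      using has_vector_derivative_transform[OF _ _ D, of x] t tn th0 xS[of _ n] by auto
    then show ?thesis using at_within_local[OF tn] by simp
  qed
  show ?thesis unfolding dde_sol_def using show1 show2 show3 by blast
qed

end



lemma norm_smult_vec: "norm ((c::complex) *s (v::complex^'d)) = norm c * norm v"
proof -
  have "norm (c *s v) = L2_set (\<lambda>i. norm c * norm (v $ i)) UNIV"
    unfolding norm_vec_def by (simp add: vector_scalar_mult_def norm_mult)
  also have "\<dots> = norm c * norm v"
    unfolding norm_vec_def by (simp add: L2_set_right_distrib)
  finally show ?thesis .
qed

lemma bl_smult: "bounded_linear (\<lambda>v::complex^'d. c *s v)"
proof (rule bounded_linear_intro[where K="norm c"])
  show "c *s (x + y) = c *s x + c *s y" for x y :: "complex^'d"
    by (simp add: vec_eq_iff vector_scalar_mult_def algebra_simps)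
  show "c *s (r *\<^sub>R x) = r *\<^sub>R (c *s x)" for r x
    by (simp add: vec_eq_iff vector_scalar_mult_def scaleR_conv_of_real algebra_simps)
  show "norm (c *s x) \<le> norm x * norm c" for x :: "complex^'d"
    by (simp add: norm_smult_vec mult.commute)
qed

lemma smult_deriv:
  assumes "(f has_vector_derivative D) F"
  shows "((\<lambda>t. (c::complex) *s (f t :: complex^'d)) has_vector_derivative c *s D) F"
proof -
  have "((\<lambda>t. c *s f t) has_derivative (\<lambda>r. c *s (r *\<^sub>R D))) F"
    using bounded_linear.has_derivative[OF bl_smult assms[unfolded has_vector_derivative_def]] .
  moreover have "(\<lambda>r. c *s (r *\<^sub>R D)) = (\<lambda>r. r *\<^sub>R (c *s D))"
    by (simp add: fun_eq_iff vec_eq_iff vector_scalar_mult_def scaleR_conv_of_real algebra_simps)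
  ultimately show ?thesis by (simp add: has_vector_derivative_def)
qed

lemma smult_sum: "(c::complex) *s (\<Sum>j\<in>S. f j :: complex^'d) = (\<Sum>j\<in>S. c *s f j)"
  by (simp add: vec_eq_iff vector_scalar_mult_def sum_distrib_left)

lemma scaleR_smult: "(r::real) *\<^sub>R (v::complex^'d) = complex_of_real r *s v"
proof -
  have "(r *\<^sub>R v) $ i = complex_of_real r * v $ i" for i
  proof -
    have "(r *\<^sub>R v) $ i = r *\<^sub>R (v $ i)" by (rule vector_scaleR_component)
    also have "\<dots> = complex_of_real r * v $ i" by (rule scaleR_conv_of_real)
    finally show ?thesis .
  qed
  then show ?thesis by (simp add: vec_eq_iff vector_scalar_mult_def)
qed

lemma divmod_shift:
  fixes a z :: int and N :: nat
  assumes "N > 0"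
  shows "(a * int N + z) div int N = a + z div int N" "(a * int N + z) mod int N = z mod int N"
  using assms by simp_all

lemma idx_a_eq: "N > 0 \<Longrightarrow> idx_a N k = (k - 1) div int N"
  unfolding idx_a_def using floor_divide_of_int_eq[of "k - 1" "int N"] by simp




locale flo = dde A h \<tau> for A :: "nat \<Rightarrow> real \<Rightarrow> real^'d^'d" and h \<tau> +
  fixes N :: nat and T \<Delta> :: real and n :: "nat \<Rightarrow> int" and \<mu> :: complex
  assumes Delta_pos: "0 < \<Delta>" and Npos: "0 < N" and T_eq: "T = real N * \<Delta>"
    and tau_eq: "\<And>j. j \<le> h \<Longrightarrow> \<tau> j = real_of_int (n j) * \<Delta>"
    and periodic: "\<And>j t. j \<le> h \<Longrightarrow> A j (t + T) = A j t"
    and mu_nz: "\<mu> \<noteq> 0"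
begin

lemma Tpos: "0 < T" using Delta_pos Npos by (simp add: T_eq)

lemma per_nat: "j \<le> h \<Longrightarrow> A j (t + real m * T) = A j t"
proof (induction m arbitrary: t)
  case 0 then show ?case by simp
next
  case (Suc m)
  have "A j (t + real (Suc m) * T) = A j ((t + real m * T) + T)" by (simp add: algebra_simps)
  also have "\<dots> = A j t" using Suc periodic by simp
  finally show ?case .
qed

lemma per_int: assumes j: "j \<le> h" shows "A j (t + real_of_int a * T) = A j t"
proof (cases "a \<ge> 0")
  case True
  define m where "m = nat a"
  have "a = int m" using True by (simp add: m_def)
  then show ?thesis using per_nat[of j t m] True j by simp
next
  case False
  define m where "m = nat (- a)"
  have m: "a = - int m" using False by (simp add: m_def)
  have "A j t = A j ((t - real m * T) + real m * T)" by simp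
  also have "\<dots> = A j (t - real m * T)" using per_nat[OF j] by blast
  finally show ?thesis using m by simp
qed

lemma n_nonneg: "j \<le> h \<Longrightarrow> 0 \<le> n j"
  using tau_nn[of j] tau_eq[of j] Delta_pos by (simp add: zero_le_mult_iff)

lemma mono_eq:
  assumes xs: "dde_sol A h \<tau> \<phi> x"
  shows "monodromy A h \<tau> T \<phi> = (\<lambda>\<theta>. if \<theta> \<in> {-\<tau> h..0} then x (T + \<theta>) else 0)"
  unfolding monodromy_def
proof (rule the_equality)
  show "\<exists>x'. dde_sol A h \<tau> \<phi> x' \<and> (\<lambda>\<theta>. if \<theta> \<in> {-\<tau> h..0} then x (T + \<theta>) else 0)
          = (\<lambda>\<theta>. if \<theta> \<in> {-\<tau> h..0} then x' (T + \<theta>) else 0)" using xs by blast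
next
  fix y assume "\<exists>x'. dde_sol A h \<tau> \<phi> x' \<and> y = (\<lambda>\<theta>. if \<theta> \<in> {-\<tau> h..0} then x' (T + \<theta>) else 0)"
  then obtain x' where x': "dde_sol A h \<tau> \<phi> x'" "y = (\<lambda>\<theta>. if \<theta> \<in> {-\<tau> h..0} then x' (T + \<theta>) else 0)"
    by blast
  have "x' (T + \<theta>) = x (T + \<theta>)" if "\<theta> \<in> {-\<tau> h..0}" for \<theta>
    by (rule dde_sol_uniq[OF x'(1) xs]) (use that Tpos in auto)
  then show "y = (\<lambda>\<theta>. if \<theta> \<in> {-\<tau> h..0} then x (T + \<theta>) else 0)"
    using x'(2) by (auto simp: fun_eq_iff)
qed

lemma shift_sol:
  assumes xs: "dde_sol A h \<tau> \<phi> x" and xT: "\<forall>\<theta>\<in>{-\<tau> h..0}. x (T + \<theta>) = \<mu> *s x \<theta>"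
  shows "\<forall>t\<ge>-\<tau> h. x (t + T) = \<mu> *s x t"
proof -
  define y where "y t = inverse \<mu> *s x (t + T)" for t
  have cx: "continuous_on {-\<tau> h..} x" using xs by (simp add: dde_sol_def)
  have init: "\<forall>\<theta>\<in>{-\<tau> h..0}. x \<theta> = \<phi> \<theta>" using xs by (simp add: dde_sol_def)
  have ys: "dde_sol A h \<tau> \<phi> y"
    unfolding dde_sol_def
  proof (intro conjI allI impI ballI)
    have "continuous_on {-\<tau> h..} (\<lambda>t. x (t + T))"
      by (rule continuous_on_compose2[OF cx]) (use Tpos in \<open>auto intro!: continuous_intros\<close>)
    then show "continuous_on {-\<tau> h..} y"
      unfolding y_def by (rule bounded_linear.continuous_on[OF bl_smult])
  next
    fix \<theta> assume th: "\<theta> \<in> {-\<tau> h..0}"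
    have "x (T + \<theta>) = \<mu> *s x \<theta>" using xT th by blast
    then have "y \<theta> = inverse \<mu> *s (\<mu> *s x \<theta>)" by (simp add: y_def add.commute)
    also have "\<dots> = x \<theta>" using mu_nz by (simp add: vector_smult_assoc)
    finally show "y \<theta> = \<phi> \<theta>" using init th by simp
  next
    fix t :: real assume t: "0 \<le> t"
    have D1: "(x has_vector_derivative rhs x (t + T)) (at (t + T) within {0..})"
      using xs t Tpos by (simp add: dde_sol_def)
    have D2: "((\<lambda>s. s + T) has_vector_derivative 1) (at t within {0..})"
      by (auto intro!: derivative_eq_intros)
    have sub: "(\<lambda>s. s + T) ` {0..} \<subseteq> {0::real..}" using Tpos by auto
    have "((x \<circ> (\<lambda>s. s + T)) has_vector_derivative (1 *\<^sub>R rhs x (t + T))) (at t within {0..})"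
      by (rule vector_diff_chain_within[OF D2]) (use has_vector_derivative_within_subset[OF D1 sub] in simp)
    then have "(y has_vector_derivative inverse \<mu> *s rhs x (t + T)) (at t within {0..})"
      unfolding y_def using smult_deriv[of "x \<circ> (\<lambda>s. s + T)"] by (simp add: o_def)
    moreover have "inverse \<mu> *s rhs x (t + T) = rhs y t"
      unfolding dde_rhs_def smult_sum
    proof (rule sum.cong[OF refl])
      fix j assume "j \<in> {..h}"
      then have j: "j \<le> h" by simp
      have "t + T - \<tau> j = t - \<tau> j + T" by simp
      then show "inverse \<mu> *s (cmat (A j (t + T)) *v x (t + T - \<tau> j)) = cmat (A j t) *v y (t - \<tau> j)"
        using periodic[OF j, of t] by (simp only: y_def vector_scalar_commute)
    qed
    ultimately show "(y has_vector_derivative rhs y t) (at t within {0..})" by simp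
  qed
  show ?thesis
  proof (intro allI impI)
    fix t assume t: "-\<tau> h \<le> t"
    have "y t = x t" by (rule dde_sol_uniq[OF ys xs t])
    then have "\<mu> *s y t = \<mu> *s x t" by simp
    then show "x (t + T) = \<mu> *s x t" using mu_nz by (simp add: y_def vector_smult_assoc)
  qed
qed

end



context flo
begin

lemma idx_b_range: "idx_b N k \<in> {1..N}"
proof -
  have "(k - 1) mod int N < int N" "0 \<le> (k - 1) mod int N" using Npos by simp_all
  then have "nat ((k - 1) mod int N) < N" by (simp add: nat_less_iff)
  then show ?thesis unfolding idx_b_def by auto
qed

lemma idx_decomp: "real_of_int k - 1 = real_of_int (idx_a N k) * real N + (real (idx_b N k) - 1)"
proof -
  have "real_of_int (k - 1) = real_of_int ((k - 1) div int N * int N + (k - 1) mod int N)"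
    by (simp only: div_mult_mod_eq)
  also have "\<dots> = real_of_int ((k - 1) div int N) * real N + real_of_int ((k - 1) mod int N)"
    by (simp only: of_int_add of_int_mult of_int_of_nat_eq)
  finally have e: "real_of_int (k - 1) = real_of_int ((k - 1) div int N) * real N + real_of_int ((k - 1) mod int N)" .
  have "(k - 1) mod int N \<ge> 0" using Npos by simp
  then have "real (nat ((k - 1) mod int N) + 1) - 1 = real_of_int ((k - 1) mod int N)" by simp
  then show ?thesis unfolding idx_a_eq[OF Npos] idx_b_def using e by simp
qed

lemma xpow:
  assumes xper: "\<forall>t\<ge>-\<tau> h. x (t + T) = \<mu> *s x t"
    and t: "-\<tau> h \<le> t" and ta: "-\<tau> h \<le> t + real_of_int a * T"
  shows "x (t + real_of_int a * T) = (\<mu> powi a) *s x t"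
proof -
  have nat: "x (t + real m * T) = (\<mu> ^ m) *s x t" if "-\<tau> h \<le> t" for t m
  proof (induction m)
    case 0 then show ?case by simp
  next
    case (Suc m)
    have "-\<tau> h \<le> t + real m * T" using that Tpos by (smt (verit) of_nat_0_le_iff zero_le_mult_iff)
    then have "x ((t + real m * T) + T) = \<mu> *s x (t + real m * T)"
      using xper by blast
    moreover have "t + real (Suc m) * T = (t + real m * T) + T" by (simp add: algebra_simps)
    ultimately have "x (t + real (Suc m) * T) = \<mu> *s x (t + real m * T)"
      by (simp only:)
    also have "\<dots> = (\<mu> ^ Suc m) *s x t" using Suc by (simp add: vector_smult_assoc)
    finally show ?case .
  qed
  show ?thesis
  proof (cases "a \<ge> 0")
    case True
    define m where "m = nat a"
    have "a = int m" using True by (simp add: m_def)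
    then show ?thesis using nat[OF t, of m] by (simp add: power_int_def)
  next
    case False
    define m where "m = nat (- a)"
    have m: "a = - int m" using False by (simp add: m_def)
    define t' where "t' = t + real_of_int a * T"
    have tt: "t = t' + real m * T" by (simp add: t'_def m)
    have ta': "-\<tau> h \<le> t'" using ta by (simp add: t'_def)
    have "x (t' + real m * T) = (\<mu> ^ m) *s x t'" by (rule nat[OF ta'])
    then have "x t = (\<mu> ^ m) *s x t'" by (subst tt) simp
    then have "inverse (\<mu> ^ m) *s x t = x t'" using mu_nz by (simp add: vector_smult_assoc)
    then have "x (t + real_of_int a * T) = inverse (\<mu> ^ m) *s x t" by (simp add: t'_def)
    moreover have "\<mu> powi a = inverse (\<mu> ^ m)" by (simp add: m power_int_minus)
    ultimately show ?thesis by simp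
  qed
qed


lemma fwd:
  assumes fm: "floquet_multiplier A h \<tau> T \<mu>"
  shows "\<exists>q. floquet_bvp A h n N \<Delta> \<mu> q"
proof -
  obtain \<phi> where c\<phi>: "continuous_on {-\<tau> h..0} \<phi>" and nz: "\<exists>\<theta>\<in>{-\<tau> h..0}. \<phi> \<theta> \<noteq> 0"
    and eig: "\<forall>\<theta>\<in>{-\<tau> h..0}. monodromy A h \<tau> T \<phi> \<theta> = \<mu> *s \<phi> \<theta>"
    using fm unfolding floquet_multiplier_def by blast
  obtain x where xs: "dde_sol A h \<tau> \<phi> x" using dde_sol_exists[OF c\<phi>] by blast
  have init: "\<forall>\<theta>\<in>{-\<tau> h..0}. x \<theta> = \<phi> \<theta>" using xs by (simp add: dde_sol_def)
  have cx: "continuous_on {-\<tau> h..} x" using xs by (simp add: dde_sol_def)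
  have xT: "\<forall>\<theta>\<in>{-\<tau> h..0}. x (T + \<theta>) = \<mu> *s x \<theta>"
    using eig init by (simp add: mono_eq[OF xs])
  have xper: "\<forall>t\<ge>-\<tau> h. x (t + T) = \<mu> *s x t" by (rule shift_sol[OF xs xT])
  define q where "q m s = x ((s + real m - 1) * \<Delta>)" for m s
  have L2: "x ((s + real_of_int k - 1) * \<Delta>) = (\<mu> powi idx_a N k) *s q (idx_b N k) s"
    if s: "s \<in> {0..1}" and kk: "-\<tau> h \<le> (s + real_of_int k - 1) * \<Delta>" for s k
  proof -
    define t where "t = (s + real (idx_b N k) - 1) * \<Delta>"
    have t0: "0 \<le> t" using s idx_b_range[of k] Delta_pos by (auto simp: t_def)
    have "s + real_of_int k - 1 = (s + real (idx_b N k) - 1) + real_of_int (idx_a N k) * real N"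
      using idx_decomp[of k] by linarith
    then have e: "(s + real_of_int k - 1) * \<Delta> = t + real_of_int (idx_a N k) * T"
      by (simp add: t_def T_eq algebra_simps)
    show ?thesis using xpow[OF xper, of t "idx_a N k"] t0 kk th0 e by (simp add: q_def t_def)
  qed
  have qD: "(q m has_vector_derivative \<Delta> *\<^sub>R rhs x ((s + real m - 1) * \<Delta>)) (at s within {0..1})"
    if m: "m \<in> {1..N}" and s: "s \<in> {0..1}" for m s
  proof -
    define f where "f s = (s + real m - 1) * \<Delta>" for s
    have t0: "0 \<le> f s" using m s Delta_pos by (auto simp: f_def)
    have D1: "(x has_vector_derivative rhs x (f s)) (at (f s) within {0..})"
      using xs t0 by (simp add: dde_sol_def)
    have D2: "(f has_vector_derivative \<Delta>) (at s within {0..1})"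
      unfolding f_def by (auto intro!: derivative_eq_intros)
    have sub: "f ` {0..1} \<subseteq> {0..}" using m Delta_pos by (auto simp: f_def)
    have "((x \<circ> f) has_vector_derivative \<Delta> *\<^sub>R rhs x (f s)) (at s within {0..1})"
      by (rule vector_diff_chain_within[OF D2 has_vector_derivative_within_subset[OF D1 sub]])
    moreover have "x \<circ> f = q m" by (simp add: fun_eq_iff f_def q_def)
    ultimately show ?thesis by (simp add: f_def)
  qed
  have rhs_eq: "rhs x ((s + real m - 1) * \<Delta>) = (\<Sum>j\<le>h. cmat (A j ((s + real m - 1) * \<Delta>)) *v
              ((\<mu> powi idx_a N (int m - n j)) *s q (idx_b N (int m - n j)) s))"
    if m: "m \<in> {1..N}" and s: "s \<in> {0..1}" for m s
    unfolding dde_rhs_def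
  proof (rule sum.cong[OF refl])
    fix j assume "j \<in> {..h}"
    then have j: "j \<le> h" by simp
    have e: "(s + real m - 1) * \<Delta> - \<tau> j = (s + real_of_int (int m - n j) - 1) * \<Delta>"
      using tau_eq[OF j] by (simp add: algebra_simps)
    have "0 \<le> (s + real m - 1) * \<Delta>"
      using m s Delta_pos by (auto intro!: mult_nonneg_nonneg)
    then have "-\<tau> h \<le> (s + real m - 1) * \<Delta> - \<tau> j"
      using tau_le[OF j] by linarith
    then have kk: "-\<tau> h \<le> (s + real_of_int (int m - n j) - 1) * \<Delta>" by (simp only: e)
    have "x ((s + real m - 1) * \<Delta> - \<tau> j) = (\<mu> powi idx_a N (int m - n j)) *s q (idx_b N (int m - n j)) s"
      unfolding e by (rule L2[OF s kk])
    then show "cmat (A j ((s + real m - 1) * \<Delta>)) *v x ((s + real m - 1) * \<Delta> - \<tau> j) =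
      cmat (A j ((s + real m - 1) * \<Delta>)) *v ((\<mu> powi idx_a N (int m - n j)) *s q (idx_b N (int m - n j)) s)"
      by (simp only:)
  qed
  have qcont: "continuous_on {0..1} (q m)" if m: "m \<in> {1..N}" for m
  proof -
    have "(\<lambda>s. (s + real m - 1) * \<Delta>) ` {0..1} \<subseteq> {-\<tau> h..}"
    proof
      fix y assume "y \<in> (\<lambda>s. (s + real m - 1) * \<Delta>) ` {0..1}"
      then obtain s where s: "s \<in> {0..1}" "y = (s + real m - 1) * \<Delta>" by blast
      have "0 \<le> (s + real m - 1) * \<Delta>"
        using m s Delta_pos by (auto intro!: mult_nonneg_nonneg)
      then show "y \<in> {-\<tau> h..}" using s th0 by simp
    qed
    then show ?thesis unfolding q_def
      by (intro continuous_on_compose2[OF cx] continuous_intros) auto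
  qed
  show ?thesis
    unfolding floquet_bvp_def
  proof (intro exI[of _ q] conjI ballI)
    fix m assume m: "m \<in> {1..N}"
    show "continuous_on {0..1} (q m)" by (rule qcont[OF m])
  next
    show "\<exists>m\<in>{1..N}. q m 0 \<noteq> 0"
    proof (rule ccontr)
      assume "\<not> (\<exists>m\<in>{1..N}. q m 0 \<noteq> 0)"
      then have Z0: "\<forall>m\<in>{1..N}. q m 0 = 0" by blast
      obtain K where K: "K \<ge> 0" "\<forall>t\<in>{0..T}. KA t \<le> K" using KA_bound by blast
      define C where "C = (\<Sum>m\<in>{1..N}. \<Sum>j\<le>h. norm (\<mu> powi idx_a N (int m - n j)))"
      define g where "g s = (\<Sum>m\<in>{1..N}. norm (q m s))" for s
      have Cb: "norm (\<mu> powi idx_a N (int m - n j)) \<le> C" if "m \<in> {1..N}" "j \<le> h" for m j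
      proof -
        have "norm (\<mu> powi idx_a N (int m - n j)) \<le> (\<Sum>j\<le>h. norm (\<mu> powi idx_a N (int m - n j)))"
          using that by (intro member_le_sum) auto
        also have "\<dots> \<le> C" unfolding C_def using that
          by (intro member_le_sum[of m _ "\<lambda>m. \<Sum>j\<le>h. norm (\<mu> powi idx_a N (int m - n j))"])
             (auto intro: sum_nonneg)
        finally show ?thesis .
      qed
      have C0: "0 \<le> C" unfolding C_def by (intro sum_nonneg) auto
      have gb: "norm (q b s) \<le> g s" if "b \<in> {1..N}" for b s
        unfolding g_def using that by (intro member_le_sum) auto
      have g0: "0 \<le> g s" for s unfolding g_def by (intro sum_nonneg) auto
      have gz: "\<forall>s\<in>{0..1}. g s = 0"
      proof (rule gronwall_step[where K="real N * (\<Delta> * (K * C))"])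
        show "continuous_on {0..1} g" unfolding g_def
          by (intro continuous_intros qcont) auto
        show "g 0 = 0" using Z0 by (simp add: g_def)
        show "0 \<le> real N * (\<Delta> * (K * C))" using K C0 Delta_pos by simp
        show "0 \<le> g s" for s by (rule g0)
      next
        fix c t M
        assume ct: "0 \<le> c" "c \<le> t" "t \<le> 1" and Z: "\<forall>r\<in>{0..c}. g r = 0"
          and MM: "\<forall>r\<in>{c..t}. g r \<le> M"
        have "g c \<le> M" using MM ct by auto
        then have M0: "0 \<le> M" using g0[of c] by linarith
        have qb: "norm (q m t) \<le> (\<Delta> * (K * (C * M))) * (t - c)" if m: "m \<in> {1..N}" for m
        proof -
          have "g c = 0" using Z ct by auto
          then have "norm (q m c) = 0" using gb[OF m, of c] norm_ge_zero[of "q m c"] by linarith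
          then have qc: "q m c = 0" by simp
          have "norm (q m t - q m c) \<le> (\<Delta> * (K * (C * M))) * (t - c)"
          proof (rule vec_mvt[where f'="\<lambda>r. \<Delta> *\<^sub>R rhs x ((r + real m - 1) * \<Delta>)"])
            fix r assume r: "r \<in> {c..t}"
            have sub: "{c..t} \<subseteq> {0..1}" using ct by auto
            show "(q m has_vector_derivative \<Delta> *\<^sub>R rhs x ((r + real m - 1) * \<Delta>)) (at r within {c..t})"
              using qD[OF m, of r] r sub by (auto intro: has_vector_derivative_within_subset)
            define tt where "tt = (r + real m - 1) * \<Delta>"
            have tt0: "0 \<le> tt" using m r ct Delta_pos by (auto simp: tt_def intro!: mult_nonneg_nonneg)
            have "tt \<le> T"
            proof -
              have "r + real m - 1 \<le> real N" using m r ct by auto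
              then show ?thesis using Delta_pos by (simp add: tt_def T_eq mult_right_mono)
            qed
            then have KAt: "KA tt \<le> K" using K tt0 by auto
            have "norm (rhs x tt) = norm (rhs x tt - rhs (\<lambda>_. 0) tt)" by (simp add: dde_rhs_def)
            also have "\<dots> \<le> KA tt * (C * M)"
            proof (rule rhs_diff_bound)
              fix j assume j: "j \<le> h"
              have rs: "r \<in> {0..1}" using r ct by auto
              have "x (tt - \<tau> j) = (\<mu> powi idx_a N (int m - n j)) *s q (idx_b N (int m - n j)) r"
              proof -
                have "rhs x tt = (\<Sum>j\<le>h. cmat (A j tt) *v
                   ((\<mu> powi idx_a N (int m - n j)) *s q (idx_b N (int m - n j)) r))"
                  using rhs_eq[OF m rs] by (simp add: tt_def)
                have e: "tt - \<tau> j = (r + real_of_int (int m - n j) - 1) * \<Delta>"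
                  using tau_eq[OF j] by (simp add: tt_def algebra_simps)
                have "-\<tau> h \<le> tt - \<tau> j" using tt0 tau_le[OF j] by linarith
                then have kk: "-\<tau> h \<le> (r + real_of_int (int m - n j) - 1) * \<Delta>" by (simp only: e)
                show ?thesis unfolding e by (rule L2[OF rs kk])
              qed
              then have "norm (x (tt - \<tau> j) - 0) = norm (\<mu> powi idx_a N (int m - n j)) * norm (q (idx_b N (int m - n j)) r)"
                by (simp add: norm_smult_vec)
              also have "\<dots> \<le> C * M"
              proof (rule mult_mono)
                show "norm (\<mu> powi idx_a N (int m - n j)) \<le> C" by (rule Cb[OF m j])
                have "norm (q (idx_b N (int m - n j)) r) \<le> g r" by (rule gb[OF idx_b_range])
                also have "\<dots> \<le> M" using MM r by auto
                finally show "norm (q (idx_b N (int m - n j)) r) \<le> M" .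
              qed (use C0 in auto)
              finally show "norm (x (tt - \<tau> j) - (\<lambda>_. 0) (tt - \<tau> j)) \<le> C * M" by simp
            qed
            also have "\<dots> \<le> K * (C * M)" using KAt C0 M0 by (intro mult_right_mono) auto
            finally have "norm (rhs x tt) \<le> K * (C * M)" .
            then show "norm (\<Delta> *\<^sub>R rhs x ((r + real m - 1) * \<Delta>)) \<le> \<Delta> * (K * (C * M))"
              using Delta_pos by (simp add: tt_def[symmetric] mult_left_mono)
          qed (use ct in auto)
          then show ?thesis using qc by simp
        qed
        have "g t \<le> (\<Sum>m\<in>{1..N}. (\<Delta> * (K * (C * M))) * (t - c))"
          unfolding g_def by (rule sum_mono) (rule qb)
        also have "\<dots> = real N * (\<Delta> * (K * C)) * (t - c) * M" by (simp add: algebra_simps)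
        finally show "g t \<le> real N * (\<Delta> * (K * C)) * (t - c) * M" .
      qed
      obtain \<theta> where th: "\<theta> \<in> {-\<tau> h..0}" "\<phi> \<theta> \<noteq> 0" using nz by blast
      define fl where "fl = \<lfloor>\<theta> / \<Delta>\<rfloor>"
      define s where "s = \<theta> / \<Delta> - real_of_int fl"
      have s: "s \<in> {0..1}"
      proof -
        have "real_of_int fl \<le> \<theta> / \<Delta>" "\<theta> / \<Delta> < real_of_int fl + 1"
          unfolding fl_def by linarith+
        then show ?thesis unfolding s_def by simp
      qed
      have e: "\<theta> = (s + real_of_int (fl + 1) - 1) * \<Delta>" using Delta_pos by (simp add: s_def)
      have kk: "-\<tau> h \<le> (s + real_of_int (fl + 1) - 1) * \<Delta>" using th e by simp
      have "x \<theta> = (\<mu> powi idx_a N (fl + 1)) *s q (idx_b N (fl + 1)) s"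
        by (subst e) (rule L2[OF s kk])
      moreover have "q (idx_b N (fl + 1)) s = 0"
        using gb[OF idx_b_range, of "fl + 1" s] gz s g0[of s] by auto
      ultimately have "x \<theta> = 0" by simp
      then show False using th init by auto
    qed
  next
    fix m and s :: real assume m: "m \<in> {1..N}" and s: "s \<in> {0..1}"
    show "(q m has_vector_derivative complex_of_real \<Delta> *s (\<Sum>j\<le>h. cmat (A j ((s + real m - 1) * \<Delta>)) *v
              ((\<mu> powi idx_a N (int m - n j)) *s q (idx_b N (int m - n j)) s))) (at s within {0..1})"
      using qD[OF m s] rhs_eq[OF m s] by (simp add: scaleR_smult)
  next
    fix m assume m: "m \<in> {1..N}"
    show "q m 1 = (if m < N then q (m + 1) 0 else \<mu> *s q 1 0)"
    proof (cases "m < N")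
      case True then show ?thesis by (simp add: q_def)
    next
      case False
      then have "m = N" using m by auto
      then have "q m 1 = x (0 + T)" by (simp add: q_def T_eq)
      also have "\<dots> = \<mu> *s x 0" using xper[rule_format, of 0] th0 by simp
      finally show ?thesis using False by (simp add: q_def)
    qed
  qed
qed

end



lemma divmod_uniq:
  fixes a r :: int and N :: nat
  assumes "0 \<le> r" "r < int N"
  shows "(a * int N + r) div int N = a" "(a * int N + r) mod int N = r"
proof -
  have N: "N > 0" using assms by simp
  show "(a * int N + r) div int N = a" using divmod_shift(1)[OF N, of a r] assms by (simp add: div_pos_pos_trivial)
  show "(a * int N + r) mod int N = r" using divmod_shift(2)[OF N, of a r] assms by (simp add: mod_pos_pos_trivial)
qed

context flo
begin

lemma bwd:
  assumes bvp: "floquet_bvp A h n N \<Delta> \<mu> q"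
  shows "floquet_multiplier A h \<tau> T \<mu>"
proof -
  have qc: "\<And>m. m \<in> {1..N} \<Longrightarrow> continuous_on {0..1} (q m)"
    and qnz: "\<exists>m\<in>{1..N}. q m 0 \<noteq> 0"
    and qd: "\<And>m s. m \<in> {1..N} \<Longrightarrow> s \<in> {0..1} \<Longrightarrow> (q m has_vector_derivative
         (complex_of_real \<Delta> *s (\<Sum>j\<le>h.
            cmat (A j ((s + real m - 1) * \<Delta>)) *v
              ((\<mu> powi idx_a N (int m - n j)) *s q (idx_b N (int m - n j)) s))))
       (at s within {0..1})"
    and qb: "\<And>m. m \<in> {1..N} \<Longrightarrow> q m 1 = (if m < N then q (m + 1) 0 else \<mu> *s q 1 0)"
    using bvp unfolding floquet_bvp_def by blast+
  define P where "P k s = (\<mu> powi (k div int N)) *s q (nat (k mod int N) + 1) s" for k s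
  define X where "X t = P \<lfloor>t / \<Delta>\<rfloor> (t / \<Delta> - real_of_int \<lfloor>t / \<Delta>\<rfloor>)" for t
  have Nz: "int N > 0" using Npos by simp
  have L1a: "X ((s + real_of_int k) * \<Delta>) = P k s" if "0 \<le> s" "s < 1" for s k
  proof -
    have e: "(s + real_of_int k) * \<Delta> / \<Delta> = s + real_of_int k" using Delta_pos by simp
    have "\<lfloor>s + real_of_int k\<rfloor> = k" using that by (intro floor_unique) auto
    then show ?thesis by (simp add: X_def e)
  qed
  have L1: "X ((s + real_of_int k) * \<Delta>) = P k s" if s: "s \<in> {0..1}" for s k
  proof (cases "s < 1")
    case True then show ?thesis using L1a s by simp
  next
    case False
    then have s1: "s = 1" using s by simp
    have "X ((s + real_of_int k) * \<Delta>) = P (k + 1) 0"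
      using L1a[of 0 "k + 1"] s1 by (simp add: add.commute)
    also have "P (k + 1) 0 = P k 1"
    proof -
      define a where "a = k div int N"
      define r where "r = k mod int N"
      have r: "0 \<le> r" "r < int N" using Nz by (simp_all add: r_def)
      have kar: "k = a * int N + r" by (simp add: a_def r_def)
      show ?thesis
      proof (cases "r + 1 < int N")
        case True
        have d: "(k + 1) div int N = a" "(k + 1) mod int N = r + 1"
          using divmod_uniq[of "r + 1" N a] True r by (simp_all add: kar add.assoc)
        define m where "m = nat r + 1"
        have m: "m \<in> {1..N}" "m < N" using r True by (auto simp: m_def)
        have "nat (r + 1) + 1 = m + 1" using r by (simp add: m_def)
        then show ?thesis using qb[OF m(1)] m(2)
          by (simp add: P_def d a_def[symmetric] r_def[symmetric] m_def)
      next
        case False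
        then have rN: "r + 1 = int N" using r by simp
        have d: "(k + 1) div int N = a + 1" "(k + 1) mod int N = 0"
          using divmod_uniq[of 0 N "a + 1"] Nz by (simp_all add: kar rN[symmetric] algebra_simps)
        have "int (nat r + 1) = int N" using rN r(1) by simp
        then have m: "nat r + 1 = N" by (rule of_nat_eq_iff[THEN iffD1])
        have NN: "N \<in> {1..N}" using Npos by simp
        have m': "Suc (nat r) = N" using m by simp
        have "P k 1 = (\<mu> powi a) *s q N 1"
          by (simp add: P_def a_def[symmetric] r_def[symmetric] m')
        also have "\<dots> = (\<mu> powi a) *s (\<mu> *s q 1 0)"
          using qb[OF NN] by simp
        also have "\<dots> = (\<mu> powi (a + 1)) *s q 1 0"
          using mu_nz by (simp add: vector_smult_assoc power_int_add_1)
        finally show ?thesis by (simp add: P_def d)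
      qed
    qed
    finally show ?thesis using s1 by simp
  qed
  have bk: "nat (k mod int N) + 1 \<in> {1..N}" for k
    using idx_b_range[of "k + 1"] by (simp add: idx_b_def)
  have DX: "(X has_vector_derivative rhs X t) (at t within {real_of_int k * \<Delta>..(real_of_int k + 1) * \<Delta>})"
    if t: "t \<in> {real_of_int k * \<Delta>..(real_of_int k + 1) * \<Delta>}" for t k
  proof -
    define I where "I = {real_of_int k * \<Delta>..(real_of_int k + 1) * \<Delta>}"
    define a where "a = k div int N"
    define r where "r = k mod int N"
    define b where "b = nat r + 1"
    define sf where "sf u = u / \<Delta> - real_of_int k" for u
    have r: "0 \<le> r" "r < int N" using Nz by (simp_all add: r_def)
    have kar: "k = a * int N + r" by (simp add: a_def r_def)
    have b: "b \<in> {1..N}" using bk[of k] by (simp add: b_def r_def)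
    have sfI: "sf u \<in> {0..1}" if "u \<in> I" for u
    proof -
      have "real_of_int k \<le> u / \<Delta>" "u / \<Delta> \<le> real_of_int k + 1"
        using that Delta_pos by (auto simp: I_def field_simps)
      then show ?thesis by (simp add: sf_def)
    qed
    define s where "s = sf t"
    have s: "s \<in> {0..1}" using sfI t by (simp add: s_def I_def)
    have ts: "t = (s + real_of_int k) * \<Delta>" using Delta_pos by (simp add: s_def sf_def field_simps)
    have XI: "X u = (\<mu> powi a) *s q b (sf u)" if "u \<in> I" for u
    proof -
      have "u = (sf u + real_of_int k) * \<Delta>" using Delta_pos by (simp add: sf_def field_simps)
      then have "X u = P k (sf u)" using L1[OF sfI[OF that], of k] by simp
      then show ?thesis by (simp add: P_def a_def[symmetric] r_def[symmetric] b_def)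
    qed
    define S where "S = (\<Sum>j\<le>h. cmat (A j ((s + real b - 1) * \<Delta>)) *v
              ((\<mu> powi idx_a N (int b - n j)) *s q (idx_b N (int b - n j)) s))"
    have Dq: "(q b has_vector_derivative complex_of_real \<Delta> *s S) (at (sf t) within {0..1})"
      using qd[OF b s] by (simp add: S_def s_def)
    have Dsf: "(sf has_vector_derivative 1 / \<Delta>) (at t within I)"
      unfolding sf_def by (auto intro!: derivative_eq_intros)
    have sub: "sf ` I \<subseteq> {0..1}" using sfI by auto
    have "((q b \<circ> sf) has_vector_derivative (1 / \<Delta>) *\<^sub>R (complex_of_real \<Delta> *s S)) (at t within I)"
      by (rule vector_diff_chain_within[OF Dsf has_vector_derivative_within_subset[OF Dq sub]])
    moreover have "(1 / \<Delta>) *\<^sub>R (complex_of_real \<Delta> *s S) = S"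
      using Delta_pos by (simp add: scaleR_smult vector_smult_assoc)
    ultimately have "((q b \<circ> sf) has_vector_derivative S) (at t within I)" by simp
    then have D: "((\<lambda>u. (\<mu> powi a) *s (q b \<circ> sf) u) has_vector_derivative (\<mu> powi a) *s S) (at t within I)"
      by (rule smult_deriv)
    have val: "(\<mu> powi a) *s S = rhs X t"
      unfolding S_def smult_sum dde_rhs_def
    proof (rule sum.cong[OF refl])
      fix j assume "j \<in> {..h}"
      then have j: "j \<le> h" by simp
      have br: "s + real b - 1 = s + real_of_int r" using r by (simp add: b_def)
      have "A j ((s + real b - 1) * \<Delta>) = A j ((s + real_of_int r) * \<Delta> + real_of_int a * T)"
        using per_int[OF j, of "(s + real_of_int r) * \<Delta>" a] by (simp add: br)
      also have "(s + real_of_int r) * \<Delta> + real_of_int a * T = t"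
        by (simp add: ts kar T_eq algebra_simps)
      finally have Aeq: "A j ((s + real b - 1) * \<Delta>) = A j t" .
      have ib: "int b - n j - 1 = r - n j" using r by (simp add: b_def)
      have kn: "k - n j = a * int N + (r - n j)" by (simp add: kar)
      have ia: "a + idx_a N (int b - n j) = (k - n j) div int N"
        unfolding idx_a_eq[OF Npos] ib kn divmod_shift(1)[OF Npos] by simp
      have ibb: "idx_b N (int b - n j) = nat ((k - n j) mod int N) + 1"
        unfolding idx_b_def ib kn divmod_shift(2)[OF Npos] by simp
      have tj: "t - \<tau> j = (s + real_of_int (k - n j)) * \<Delta>"
        using tau_eq[OF j] by (simp add: ts algebra_simps)
      have Xj: "X (t - \<tau> j) = (\<mu> powi ((k - n j) div int N)) *s q (nat ((k - n j) mod int N) + 1) s"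
        unfolding tj L1[OF s] P_def by simp
      have "(\<mu> powi a) *s (cmat (A j ((s + real b - 1) * \<Delta>)) *v
              ((\<mu> powi idx_a N (int b - n j)) *s q (idx_b N (int b - n j)) s))
            = cmat (A j t) *v ((\<mu> powi a * \<mu> powi idx_a N (int b - n j)) *s q (idx_b N (int b - n j)) s)"
        by (simp add: Aeq vector_scalar_commute vector_smult_assoc)
      also have "\<mu> powi a * \<mu> powi idx_a N (int b - n j) = \<mu> powi (a + idx_a N (int b - n j))"
        using mu_nz by (simp add: power_int_add)
      finally show "(\<mu> powi a) *s (cmat (A j ((s + real b - 1) * \<Delta>)) *v
              ((\<mu> powi idx_a N (int b - n j)) *s q (idx_b N (int b - n j)) s))
            = cmat (A j t) *v X (t - \<tau> j)"
        by (simp add: Xj ia ibb)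
    qed
    have tI: "t \<in> I" using t by (simp add: I_def)
    have "(X has_vector_derivative (\<mu> powi a) *s S) (at t within I)"
      by (rule has_vector_derivative_transform[OF tI _ D]) (simp add: XI)
    then show ?thesis using val by (simp add: I_def)
  qed
  have floor_iv: "real_of_int \<lfloor>t / \<Delta>\<rfloor> * \<Delta> \<le> t \<and> t < (real_of_int \<lfloor>t / \<Delta>\<rfloor> + 1) * \<Delta>" for t
  proof -
    have "real_of_int \<lfloor>t / \<Delta>\<rfloor> \<le> t / \<Delta>" "t / \<Delta> < real_of_int \<lfloor>t / \<Delta>\<rfloor> + 1" by linarith+
    then show ?thesis
      unfolding pos_le_divide_eq[OF Delta_pos] pos_divide_less_eq[OF Delta_pos] by simp
  qed
  have DXa: "(X has_vector_derivative rhs X t) (at t)" for t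
  proof -
    define k where "k = \<lfloor>t / \<Delta>\<rfloor>"
    have k1: "real_of_int k * \<Delta> \<le> t" "t < (real_of_int k + 1) * \<Delta>" using floor_iv[of t] by (simp_all add: k_def)
    show ?thesis
    proof (cases "real_of_int k * \<Delta> < t")
      case True
      have "t \<in> interior {real_of_int k * \<Delta>..(real_of_int k + 1) * \<Delta>}" using True k1 by simp
      then show ?thesis using DX[of t k] k1 at_within_interior by fastforce
    next
      case False
      then have tk: "t = real_of_int k * \<Delta>" using k1 by simp
      define l where "l = (real_of_int k - 1) * \<Delta>"
      define u where "u = (real_of_int k + 1) * \<Delta>"
      have lt: "l < t" "t < u" using Delta_pos by (simp_all add: l_def u_def tk algebra_simps)
      have D1: "(X has_vector_derivative rhs X t) (at t within {l..t})"
        using DX[of t "k - 1"] lt by (simp add: l_def tk algebra_simps)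
      have D2: "(X has_vector_derivative rhs X t) (at t within {t..u})"
        using DX[of t k] lt by (simp add: u_def tk)
      have "(X has_vector_derivative rhs X t) (at t within ({l..t} \<union> {t..u}))"
        by (rule has_vector_derivative_Un[OF D1 D2])
      moreover have "{l..t} \<union> {t..u} = {l..u}" using lt by auto
      moreover have "t \<in> interior {l..u}" using lt by simp
      ultimately show ?thesis using at_within_interior by fastforce
    qed
  qed
  have contX: "continuous_on UNIV X"
    by (intro continuous_at_imp_continuous_on ballI has_vector_derivative_continuous[OF DXa])
  have Xper: "X (t + T) = \<mu> *s X t" for t
  proof -
    define k where "k = \<lfloor>t / \<Delta>\<rfloor>"
    define s where "s = t / \<Delta> - real_of_int k"
    have k1: "real_of_int k \<le> t / \<Delta>" "t / \<Delta> < real_of_int k + 1" unfolding k_def by linarith+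
    have s: "s \<in> {0..1}" using k1 by (simp add: s_def)
    have ts: "t = (s + real_of_int k) * \<Delta>" using Delta_pos by (simp add: s_def)
    have tT: "t + T = (s + real_of_int (k + int N)) * \<Delta>" by (simp add: ts T_eq algebra_simps)
    have d: "(k + int N) div int N = k div int N + 1" "(k + int N) mod int N = k mod int N"
      using Nz by simp_all
    have "X (t + T) = (\<mu> powi (k div int N + 1)) *s q (nat (k mod int N) + 1) s"
      unfolding tT L1[OF s] P_def d ..
    also have "\<dots> = \<mu> *s ((\<mu> powi (k div int N)) *s q (nat (k mod int N) + 1) s)"
      using mu_nz by (simp add: vector_smult_assoc power_int_add_1 mult.commute)
    also have "\<dots> = \<mu> *s X t" unfolding ts L1[OF s] P_def ..
    finally show ?thesis .
  qed
  have XS: "dde_sol A h \<tau> X X"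
    unfolding dde_sol_def
    using continuous_on_subset[OF contX] DXa has_vector_derivative_at_within by blast
  have mono: "monodromy A h \<tau> T X = (\<lambda>\<theta>. if \<theta> \<in> {-\<tau> h..0} then X (T + \<theta>) else 0)"
    by (rule mono_eq[OF XS])
  have nzX: "\<exists>\<theta>\<in>{-\<tau> h..0}. X \<theta> \<noteq> 0"
  proof (rule ccontr)
    assume "\<not> (\<exists>\<theta>\<in>{-\<tau> h..0}. X \<theta> \<noteq> 0)"
    then have X0: "\<forall>\<theta>\<in>{-\<tau> h..0}. X \<theta> = 0" by blast
    have ZS: "dde_sol A h \<tau> X (\<lambda>_. 0)"
      unfolding dde_sol_def using X0 by (auto simp: dde_rhs_def intro!: derivative_eq_intros)
    obtain m where m: "m \<in> {1..N}" "q m 0 \<noteq> 0" using qnz by blast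
    have m0: "0 \<le> int m - 1" "int m - 1 < int N" using m by auto
    have X1: "X ((0 + real_of_int (int m - 1)) * \<Delta>) = P (int m - 1) 0" by (rule L1) simp
    have mm: "Suc (nat (int m - 1)) = m" using m by auto
    have "P (int m - 1) 0 = q m 0"
      using m0 by (simp add: P_def div_pos_pos_trivial mod_pos_pos_trivial mm)
    with X1 have Xm: "X ((0 + real_of_int (int m - 1)) * \<Delta>) = q m 0" by simp
    have "0 \<le> (0 + real_of_int (int m - 1)) * \<Delta>" using m0 Delta_pos by simp
    then have "-\<tau> h \<le> (0 + real_of_int (int m - 1)) * \<Delta>" using th0 by linarith
    then have "(\<lambda>_. 0) ((0 + real_of_int (int m - 1)) * \<Delta>) = X ((0 + real_of_int (int m - 1)) * \<Delta>)"
      by (rule dde_sol_uniq[OF ZS XS])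
    then show False using Xm m(2) by simp
  qed
  show ?thesis
    unfolding floquet_multiplier_def
  proof (intro conjI exI[of _ X] mu_nz)
    show "continuous_on {-\<tau> h..0} X" using continuous_on_subset[OF contX] by blast
    show "\<exists>\<theta>\<in>{-\<tau> h..0}. X \<theta> \<noteq> 0" by (rule nzX)
    show "\<forall>\<theta>\<in>{-\<tau> h..0}. monodromy A h \<tau> T X \<theta> = \<mu> *s X \<theta>"
      using Xper by (simp add: mono add.commute)
  qed
qed

end


theorem lemma2p1:
  fixes A :: "nat \<Rightarrow> real \<Rightarrow> real^'d^'d"
    and h N :: nat and T \<Delta> :: real and \<tau> :: "nat \<Rightarrow> real" and n :: "nat \<Rightarrow> int"
    and \<mu> :: complex
  assumes smooth: "\<forall>j\<le>h. smooth_fun (A j)"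
    and T_pos: "T > 0"
    and periodic: "\<forall>j\<le>h. \<forall>t. A j (t + T) = A j t"
    and tau0: "\<tau> 0 = 0"
    and tau1: "h \<ge> 1 \<Longrightarrow> \<tau> 0 \<le> \<tau> 1"
    and tau_strict: "\<forall>j. 1 \<le> j \<and> j < h \<longrightarrow> \<tau> j < \<tau> (Suc j)"
    and Delta_pos: "\<Delta> > 0"
    and T_eq: "T = real N * \<Delta>"
    and tau_eq: "\<forall>j\<le>h. \<tau> j = real_of_int (n j) * \<Delta>"
    and n0: "n 0 = 0"
    and mu_nz: "\<mu> \<noteq> 0"
  shows "floquet_multiplier A h \<tau> T \<mu> \<longleftrightarrow> (\<exists>q. floquet_bvp A h n N \<Delta> \<mu> q)"
proof -
  have contA: "continuous_on UNIV (A j)" if j: "j \<le> h" for j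
  proof -
    obtain D where D: "D 0 = A j" "\<forall>k t. (D k has_vector_derivative D (Suc k) t) (at t)"
      using smooth j unfolding smooth_fun_def by blast
    have "continuous (at t) (A j)" for t
    proof -
      have "(D 0 has_vector_derivative D (Suc 0) t) (at t)" using D(2) by blast
      from has_vector_derivative_continuous[OF this] show ?thesis using D(1) by simp
    qed
    then show ?thesis by (simp add: continuous_at_imp_continuous_on)
  qed
  have mono: "i \<le> j \<longrightarrow> \<tau> i \<le> \<tau> j" if "1 \<le> i" "j \<le> h" for i j
    using that
  proof (induction j)
    case 0 then show ?case by simp
  next
    case (Suc j)
    show ?case
    proof
      assume ij: "i \<le> Suc j"
      show "\<tau> i \<le> \<tau> (Suc j)"
      proof (cases "i = Suc j")
        case True then show ?thesis by simp
      next
        case False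
        then have "i \<le> j" using ij by simp
        then have "\<tau> i \<le> \<tau> j" using Suc by simp
        moreover have "\<tau> j < \<tau> (Suc j)" using tau_strict Suc.prems \<open>i \<le> j\<close> by simp
        ultimately show ?thesis by simp
      qed
    qed
  qed
  have tnn: "0 \<le> \<tau> j" if "j \<le> h" for j
  proof (cases "j = 0")
    case True then show ?thesis using tau0 by simp
  next
    case False
    then have "\<tau> 1 \<le> \<tau> j" using mono[of 1 j] that by simp
    moreover have "\<tau> 0 \<le> \<tau> 1" using tau1 that False by simp
    ultimately show ?thesis using tau0 by simp
  qed
  have tle: "\<tau> j \<le> \<tau> h" if "j \<le> h" for j
  proof (cases "j = 0")
    case True then show ?thesis using tau0 tnn[of h] by simp
  next
    case False
    then show ?thesis using mono[of j h] that by simp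
  qed
  have Npos: "0 < N"
  proof (rule ccontr)
    assume "\<not> 0 < N"
    then have "N = 0" by simp
    then show False using T_pos T_eq by simp
  qed
  interpret flo A h \<tau> N T \<Delta> n \<mu>
  proof (unfold_locales)
    show "\<And>j. j \<le> h \<Longrightarrow> continuous_on UNIV (A j)" by (rule contA)
    show "\<And>j. j \<le> h \<Longrightarrow> 0 \<le> \<tau> j" by (rule tnn)
    show "\<And>j. j \<le> h \<Longrightarrow> \<tau> j \<le> \<tau> h" by (rule tle)
    show "0 < \<Delta>" by (rule Delta_pos)
    show "0 < N" by (rule Npos)
    show "T = real N * \<Delta>" by (rule T_eq)
    show "\<And>j. j \<le> h \<Longrightarrow> \<tau> j = real_of_int (n j) * \<Delta>" using tau_eq by simp
    show "\<And>j t. j \<le> h \<Longrightarrow> A j (t + T) = A j t" using periodic by simp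
    show "\<mu> \<noteq> 0" by (rule mu_nz)
  qed
  show ?thesis using fwd bwd by blast
qed

end
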